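(* Let $G=(V,E)$ be any finite connected graph. Then for all $n \ge 2$ there exists a 1-resilient asynchronous algorithm for $n$ processes communicating through single-writer atomic snapshot objects (equivalently, read/write registers) that solves graphical approximate agreement on $G$.
   Context: Graphical approximate agreement on $G$ (known to all processes): each process $p_i$ receives an input vertex $x_i\in V$ and each non-crashed process outputs $y_i\in V$ such that any two outputs are equal or adjacent in $G$ and every output lies on a shortest path in $G$ between two (not necessarily distinct) inputs. An algorithm is 1-resilient if, in every execution in which at most one process crashes, every non-crashed process eventually outputs and the outputs satisfy the specification. *)

theory Defs
  imports Main
begin

definition finite_graph :: "'v set \<Rightarrow> ('v \<Rightarrow> 'v \<Rightarrow> bool) \<Rightarrow> bool" where
  "finite_graph V E \<longleftrightarrow> finite V \<and> (\<forall>u v. E u v \<longrightarrow> u \<in> V \<and> v \<in> V)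
     \<and> (\<forall>u v. E u v \<longrightarrow> E v u) \<and> (\<forall>u. \<not> E u u)"

definition walk :: "'v set \<Rightarrow> ('v \<Rightarrow> 'v \<Rightarrow> bool) \<Rightarrow> 'v list \<Rightarrow> bool" where
  "walk V E p \<longleftrightarrow> p \<noteq> [] \<and> set p \<subseteq> V \<and> successively E p"

definition connected_graph :: "'v set \<Rightarrow> ('v \<Rightarrow> 'v \<Rightarrow> bool) \<Rightarrow> bool" where
  "connected_graph V E \<longleftrightarrow> V \<noteq> {} \<and>
     (\<forall>u\<in>V. \<forall>v\<in>V. \<exists>p. walk V E p \<and> hd p = u \<and> last p = v)"

definition gdist :: "'v set \<Rightarrow> ('v \<Rightarrow> 'v \<Rightarrow> bool) \<Rightarrow> 'v \<Rightarrow> 'v \<Rightarrow> nat" where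
  "gdist V E u v = (LEAST k. \<exists>p. walk V E p \<and> hd p = u \<and> last p = v \<and> length p = Suc k)"

definition on_shortest_path :: "'v set \<Rightarrow> ('v \<Rightarrow> 'v \<Rightarrow> bool) \<Rightarrow> 'v \<Rightarrow> 'v \<Rightarrow> 'v \<Rightarrow> bool" where
  "on_shortest_path V E u v w \<longleftrightarrow>
     (\<exists>p. walk V E p \<and> hd p = u \<and> last p = v \<and> length p = Suc (gdist V E u v) \<and> w \<in> set p)"

text \<open>Processes are 0..<n. Process i owns component i of the snapshot object.
A step of process i is determined by its local state: either an atomic
update of its own component (with a new local state), or an atomic scan of
the whole object (the new local state is a function of the scanned view).
Unwritten components hold None.\<close>

datatype ('s, 'r) op = Update 'r 's | Scan "(nat \<Rightarrow> 'r option) \<Rightarrow> 's"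

record ('s, 'r, 'v) alg =
  alg_init :: "nat \<Rightarrow> 'v \<Rightarrow> 's"
  alg_act  :: "nat \<Rightarrow> 's \<Rightarrow> ('s, 'r) op"
  alg_out  :: "nat \<Rightarrow> 's \<Rightarrow> 'v option"

type_synonym ('s, 'r) config = "(nat \<Rightarrow> 's) \<times> (nat \<Rightarrow> 'r option)"

fun step :: "('s, 'r, 'v) alg \<Rightarrow> nat \<Rightarrow> ('s, 'r) config \<Rightarrow> ('s, 'r) config" where
  "step A i (L, M) =
     (case alg_act A i (L i) of
        Update r s' \<Rightarrow> (L(i := s'), M(i := Some r))
      | Scan f \<Rightarrow> (L(i := f M), M))"

text \<open>Execution determined by inputs x and a schedule sigma (sigma t is the
process taking step t).\<close>
primrec exec :: "('s, 'r, 'v) alg \<Rightarrow> (nat \<Rightarrow> 'v) \<Rightarrow> (nat \<Rightarrow> nat) \<Rightarrow> nat \<Rightarrow> ('s, 'r) config" where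
  "exec A x \<sigma> 0 = ((\<lambda>i. alg_init A i (x i)), (\<lambda>_. None))"
| "exec A x \<sigma> (Suc t) = step A (\<sigma> t) (exec A x \<sigma> t)"

definition out_at :: "('s, 'r, 'v) alg \<Rightarrow> (nat \<Rightarrow> 'v) \<Rightarrow> (nat \<Rightarrow> nat) \<Rightarrow> nat \<Rightarrow> nat \<Rightarrow> 'v option" where
  "out_at A x \<sigma> i t = alg_out A i (fst (exec A x \<sigma> t) i)"

text \<open>Process i outputs y: y is the first output value it produces (outputs are irrevocable).\<close>
definition decides :: "('s, 'r, 'v) alg \<Rightarrow> (nat \<Rightarrow> 'v) \<Rightarrow> (nat \<Rightarrow> nat) \<Rightarrow> nat \<Rightarrow> 'v \<Rightarrow> bool" where
  "decides A x \<sigma> i y \<longleftrightarrow>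
     (\<exists>t. out_at A x \<sigma> i t = Some y \<and> (\<forall>t'<t. out_at A x \<sigma> i t' = None))"

text \<open>A process crashes in an (infinite) schedule iff it takes only finitely many steps.\<close>
definition crashed :: "(nat \<Rightarrow> nat) \<Rightarrow> nat \<Rightarrow> bool" where
  "crashed \<sigma> i \<longleftrightarrow> finite {t. \<sigma> t = i}"

definition admissible1 :: "nat \<Rightarrow> (nat \<Rightarrow> nat) \<Rightarrow> bool" where
  "admissible1 n \<sigma> \<longleftrightarrow> (\<forall>t. \<sigma> t < n) \<and> card {i. i < n \<and> crashed \<sigma> i} \<le> 1"

definition solves_GAA_1res :: "'v set \<Rightarrow> ('v \<Rightarrow> 'v \<Rightarrow> bool) \<Rightarrow> nat \<Rightarrow> ('s, 'r, 'v) alg \<Rightarrow> bool" where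
  "solves_GAA_1res V E n A \<longleftrightarrow>
    (\<forall>x \<sigma>. (\<forall>i<n. x i \<in> V) \<and> admissible1 n \<sigma> \<longrightarrow>
       (\<forall>i<n. \<not> crashed \<sigma> i \<longrightarrow> (\<exists>y. decides A x \<sigma> i y))
     \<and> (\<forall>i<n. \<forall>j<n. \<forall>yi yj. decides A x \<sigma> i yi \<and> decides A x \<sigma> j yj \<longrightarrow> yi = yj \<or> E yi yj)
     \<and> (\<forall>i<n. \<forall>y. decides A x \<sigma> i y \<longrightarrow>
           y \<in> V \<and> (\<exists>j<n. \<exists>k<n. on_shortest_path V E (x j) (x k) y)))"

end

theory Submission
  imports Defs
begin


lemma walk_shortcut:
  assumes "walk V E p" "\<not> distinct p"
  shows "\<exists>q. walk V E q \<and> hd q = hd p \<and> last q = last p \<and> length q < length p"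
proof -
  obtain xs ys zs y where p: "p = xs @ [y] @ ys @ [y] @ zs"
    using not_distinct_decomp[OF assms(2)] by blast
  let ?q = "xs @ [y] @ zs"
  have s: "successively E p" using assms(1) unfolding walk_def by simp
  have "successively E (xs @ [y])" using s unfolding p
    by (simp add: successively_append_iff)
  moreover have "successively E ([y] @ zs)"
  proof -
    have "successively E ((xs @ [y] @ ys) @ ([y] @ zs))" using s p by simp
    thus ?thesis by (simp only: successively_append_iff)
  qed
  ultimately have "successively E ?q"
    by (cases zs) (auto simp: successively_append_iff)
  moreover have "set ?q \<subseteq> V" using assms(1) unfolding walk_def p by auto
  moreover have "hd ?q = hd p" unfolding p by (cases xs) auto
  moreover have "last ?q = last p" unfolding p by (cases zs) auto
  ultimately show ?thesis unfolding walk_def p by (intro exI[of _ ?q]) auto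
qed

definition cpath :: "'v set \<Rightarrow> ('v \<Rightarrow> 'v \<Rightarrow> bool) \<Rightarrow> 'v \<Rightarrow> 'v \<Rightarrow> 'v list" where
  "cpath V E a b = (SOME p. walk V E p \<and> hd p = a \<and> last p = b \<and> length p = Suc (gdist V E a b) \<and> distinct p)"

lemma cpath_ok:
  assumes "connected_graph V E" "a \<in> V" "b \<in> V"
  shows "walk V E (cpath V E a b) \<and> hd (cpath V E a b) = a \<and> last (cpath V E a b) = b
     \<and> length (cpath V E a b) = Suc (gdist V E a b) \<and> distinct (cpath V E a b)"
proof -
  obtain p0 where "walk V E p0 \<and> hd p0 = a \<and> last p0 = b"
    using assms unfolding connected_graph_def by blast
  then have ex: "\<exists>k p. walk V E p \<and> hd p = a \<and> last p = b \<and> length p = Suc k"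
    unfolding walk_def by (intro exI[of _ "length p0 - 1"] exI[of _ p0]) auto
  obtain p where p: "walk V E p" "hd p = a" "last p = b" "length p = Suc (gdist V E a b)"
    using LeastI_ex[OF ex] unfolding gdist_def by blast
  have "distinct p"
  proof (rule ccontr)
    assume "\<not> distinct p"
    then obtain q where q: "walk V E q" "hd q = a" "last q = b" "length q < length p"
      using walk_shortcut[OF p(1)] p by metis
    then obtain k where k: "length q = Suc k" using walk_def by (cases q) auto
    then have "gdist V E a b \<le> k" unfolding gdist_def using q by (intro Least_le) blast
    with k q p show False by simp
  qed
  with p have "\<exists>p. walk V E p \<and> hd p = a \<and> last p = b \<and> length p = Suc (gdist V E a b) \<and> distinct p"
    by blast
  then show ?thesis unfolding cpath_def by (rule someI_ex)
qed

definition idx :: "'a list \<Rightarrow> 'a \<Rightarrow> nat" where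
  "idx p a = (LEAST k. p ! k = a)"

lemma idx_nth: "distinct p \<Longrightarrow> k < length p \<Longrightarrow> idx p (p ! k) = k"
  unfolding idx_def
proof (rule Least_equality)
  fix y assume "p ! y = p ! k" "distinct p" "k < length p"
  then show "k \<le> y" by (cases "y < length p") (auto simp: nth_eq_iff_index_eq)
qed simp

lemma idx_in: assumes "a \<in> set p" shows "idx p a < length p \<and> p ! idx p a = a"
proof -
  obtain k where k: "k < length p" "p ! k = a" using assms by (auto simp: in_set_conv_nth)
  have "p ! idx p a = a" unfolding idx_def by (rule LeastI[of _ k]) (rule k(2))
  moreover have "idx p a \<le> k" unfolding idx_def by (rule Least_le) (rule k(2))
  ultimately show ?thesis using k by simp
qed

definition mid :: "'a list \<Rightarrow> 'a \<Rightarrow> 'a \<Rightarrow> 'a" where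
  "mid p a b = p ! ((idx p a + idx p b) div 2)"

lemma mid_sym: "mid p a b = mid p b a"
  unfolding mid_def by (simp add: add.commute)

lemma mid_in: assumes "a \<in> set p" "b \<in> set p" shows "mid p a b \<in> set p"
proof -
  have "(idx p a + idx p b) div 2 < length p" using idx_in[OF assms(1)] idx_in[OF assms(2)] by linarith
  thus ?thesis unfolding mid_def by simp
qed

lemma idx_mid: assumes "distinct p" "a \<in> set p" "b \<in> set p"
  shows "idx p (mid p a b) = (idx p a + idx p b) div 2"
proof -
  have "(idx p a + idx p b) div 2 < length p" using idx_in[OF assms(2)] idx_in[OF assms(3)] by linarith
  thus ?thesis unfolding mid_def using idx_nth[OF assms(1)] by simp
qed

lemma arith_step:
  fixes a b a' b' :: nat and D :: int
  assumes "a' = a \<or> a' = (a + b) div 2" "b' = b \<or> b' = (a + b) div 2"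
    "a' = (a + b) div 2 \<or> b' = (a + b) div 2"
    "\<bar>int a - int b\<bar> \<le> max 1 D"
  shows "\<bar>int a' - int b'\<bar> \<le> max 1 (D - 1)"
proof -
  have m: "2 * int ((a + b) div 2) = int a + int b \<or> 2 * int ((a + b) div 2) + 1 = int a + int b"
    by presburger
  have d: "2 * \<bar>int a' - int b'\<bar> \<le> \<bar>int a - int b\<bar> + 1"
    using assms(1-3) m by (elim disjE) (simp_all add: abs_if)
  show ?thesis using d assms(4) by (simp add: max_def abs_if split: if_splits; arith)
qed


lemma converge:
  assumes dP: "distinct P" and ne: "P \<noteq> []"
  and len: "length c0 = Suc K" "length c1 = Suc K" and sub: "set c0 \<subseteq> set P" "set c1 \<subseteq> set P"
  and h0: "c0!0 = hd P" and h1: "c1!0 = last P" and lP: "length P \<le> Suc K"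
  and st: "\<And>r. r < K \<Longrightarrow> (c0!Suc r = c0!r \<or> c0!Suc r = mid P (c0!r) (c1!r))
      \<and> (c1!Suc r = c1!r \<or> c1!Suc r = mid P (c0!r) (c1!r))
      \<and> (c0!Suc r = mid P (c0!r) (c1!r) \<or> c1!Suc r = mid P (c0!r) (c1!r))"
  shows "\<bar>int (idx P (c0!K)) - int (idx P (c1!K))\<bar> \<le> 1"
proof -
  have "r \<le> K \<longrightarrow> \<bar>int (idx P (c0!r)) - int (idx P (c1!r))\<bar> \<le> max 1 (int (length P) - 1 - int r)" for r
  proof (induction r)
    case 0
    have "idx P (c0!0) = 0" using h0 idx_nth[OF dP, of 0] ne by (simp add: hd_conv_nth)
    moreover have "idx P (c1!0) = length P - 1" using h1 idx_nth[OF dP, of "length P - 1"] ne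
      by (simp add: last_conv_nth)
    ultimately show ?case using ne by simp
  next
    case (Suc r)
    show ?case
    proof
      assume r: "Suc r \<le> K"
      then have rK: "r < K" by simp
      have i0: "c0!r \<in> set P" "c1!r \<in> set P" using sub len rK by auto
      have IH: "\<bar>int (idx P (c0!r)) - int (idx P (c1!r))\<bar> \<le> max 1 (int (length P) - 1 - int r)"
        using Suc rK by simp
      have im: "idx P (mid P (c0!r) (c1!r)) = (idx P (c0!r) + idx P (c1!r)) div 2"
        using idx_mid[OF dP i0] .
      from st[OF rK] have
        "idx P (c0!Suc r) = idx P (c0!r) \<or> idx P (c0!Suc r) = (idx P (c0!r) + idx P (c1!r)) div 2"
        "idx P (c1!Suc r) = idx P (c1!r) \<or> idx P (c1!Suc r) = (idx P (c0!r) + idx P (c1!r)) div 2"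
        "idx P (c0!Suc r) = (idx P (c0!r) + idx P (c1!r)) div 2 \<or> idx P (c1!Suc r) = (idx P (c0!r) + idx P (c1!r)) div 2"
        using im by auto
      from arith_step[OF this IH] show "\<bar>int (idx P (c0!Suc r)) - int (idx P (c1!Suc r))\<bar> \<le> max 1 (int (length P) - 1 - int (Suc r))"
        by simp
    qed
  qed
  from this[of K] show ?thesis using lP by simp
qed

lemma adj_from_idx:
  assumes w: "walk V E P" and dP: "distinct P" and sym: "\<forall>u v. E u v \<longrightarrow> E v u"
    and a: "a \<in> set P" and b: "b \<in> set P" and d: "\<bar>int (idx P a) - int (idx P b)\<bar> \<le> 1"
  shows "a = b \<or> E a b"
proof -
  have ia: "idx P a < length P" "P ! idx P a = a" using idx_in[OF a] by auto
  have ib: "idx P b < length P" "P ! idx P b = b" using idx_in[OF b] by auto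
  have s: "successively E P" using w unfolding walk_def by simp
  consider "idx P a = idx P b" | "Suc (idx P a) = idx P b" | "Suc (idx P b) = idx P a" using d by linarith
  then show ?thesis
  proof cases
    case 1 then show ?thesis using ia ib by metis
  next
    case 2 then have "E (P ! idx P a) (P ! Suc (idx P a))" using successively_nth[OF s, of "idx P a"] ib by simp
    then show ?thesis using ia ib 2 by simp
  next
    case 3 then have "E (P ! idx P b) (P ! Suc (idx P b))" using successively_nth[OF s, of "idx P b"] ia by simp
    then show ?thesis using ia ib 3 sym by metis
  qed
qed


section \<open>The algorithm\<close>

definition Wv :: "(nat \<times> 'v) list option \<Rightarrow> 'v list" where
  "Wv m = (case m of None \<Rightarrow> [] | Some w \<Rightarrow> map snd w)"

definition newval :: "'v set \<Rightarrow> ('v \<Rightarrow> 'v \<Rightarrow> bool) \<Rightarrow> nat \<Rightarrow> (nat \<times> 'v) list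
    \<Rightarrow> (nat \<Rightarrow> (nat \<times> 'v) list option) \<Rightarrow> 'v" where
  "newval V E i s M = (case M (1 - i) of None \<Rightarrow> snd (last s)
     | Some w \<Rightarrow> if length s - 1 < length w then
         mid (if i = 0 then cpath V E (snd (hd s)) (snd (hd w)) else cpath V E (snd (hd w)) (snd (hd s)))
             (snd (last s)) (snd (w ! (length s - 1)))
       else snd (last s))"

definition copy1 :: "'v set \<Rightarrow> (nat \<Rightarrow> (nat \<times> 'v) list option) \<Rightarrow> (nat \<times> 'v) list" where
  "copy1 V M = (case M 1 of None \<Rightarrow> [] | Some w \<Rightarrow> if length w = Suc (card V) then [(0, snd (last w))] else [])"

definition copyf :: "'v set \<Rightarrow> (nat \<Rightarrow> (nat \<times> 'v) list option) \<Rightarrow> (nat \<times> 'v) list" where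
  "copyf V M = (case M 0 of None \<Rightarrow> copy1 V M
     | Some w \<Rightarrow> if length w = Suc (card V) then [(0, snd (last w))] else copy1 V M)"

definition actf :: "'v set \<Rightarrow> ('v \<Rightarrow> 'v \<Rightarrow> bool) \<Rightarrow> nat \<Rightarrow> (nat \<times> 'v) list
    \<Rightarrow> ((nat \<times> 'v) list, (nat \<times> 'v) list) op" where
  "actf V E i s = (if i < 2 then
       (if s \<noteq> [] \<and> fst (last s) = 1 then Update (butlast s @ [(0, snd (last s))]) (butlast s @ [(0, snd (last s))])
        else if Suc (card V) \<le> length s then Scan (\<lambda>_. s)
        else Scan (\<lambda>M. s @ [(1, newval V E i s M)]))
     else (if s \<noteq> [] then Scan (\<lambda>_. s) else Scan (copyf V)))"

definition outf :: "'v set \<Rightarrow> nat \<Rightarrow> (nat \<times> 'v) list \<Rightarrow> 'v option" where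
  "outf V i s = (if i < 2 then (if length s = Suc (card V) \<and> fst (last s) = 0 then Some (snd (last s)) else None)
     else (if s = [] then None else Some (snd (hd s))))"

definition algo :: "'v set \<Rightarrow> ('v \<Rightarrow> 'v \<Rightarrow> bool) \<Rightarrow> ((nat \<times> 'v) list, (nat \<times> 'v) list, 'v) alg" where
  "algo V E = \<lparr>alg_init = (\<lambda>i v. if i < 2 then [(1, v)] else []), alg_act = actf V E, alg_out = outf V\<rparr>"

definition fin :: "'v set \<Rightarrow> (nat \<times> 'v) list \<Rightarrow> bool" where
  "fin V s \<longleftrightarrow> length s = Suc (card V) \<and> fst (last s) = 0"

definition inv01 :: "'v set \<Rightarrow> 'v list \<Rightarrow> 'v \<Rightarrow> (nat \<times> 'v) list \<Rightarrow> (nat \<times> 'v) list option \<Rightarrow> bool" where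
  "inv01 V P xi s m \<longleftrightarrow> s \<noteq> [] \<and> snd (hd s) = xi \<and> length s \<le> Suc (card V) \<and> snd ` set s \<subseteq> set P
     \<and> (\<forall>e\<in>set (butlast s). fst e = 0) \<and> (fst (last s) = 0 \<or> fst (last s) = 1)
     \<and> m = (if fst (last s) = 1 then (if butlast s = [] then None else Some (butlast s)) else Some s)"

definition PP :: "'v set \<Rightarrow> ('v \<Rightarrow> 'v \<Rightarrow> bool) \<Rightarrow> (nat \<Rightarrow> 'v) \<Rightarrow> 'v list" where
  "PP V E x = cpath V E (x 0) (x 1)"

definition invc :: "'v set \<Rightarrow> ('v \<Rightarrow> 'v \<Rightarrow> bool) \<Rightarrow> (nat \<Rightarrow> 'v) \<Rightarrow> (nat \<Rightarrow> (nat \<times> 'v) list)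
    \<Rightarrow> (nat \<Rightarrow> (nat \<times> 'v) list option) \<Rightarrow> bool" where
  "invc V E x L M \<longleftrightarrow>
     inv01 V (PP V E x) (x 0) (L 0) (M 0) \<and> inv01 V (PP V E x) (x 1) (L 1) (M 1)
   \<and> (\<forall>i<2. \<forall>r. Suc r < length (L i) \<longrightarrow> snd (L i ! Suc r) = snd (L i ! r)
         \<or> (r < length (Wv (M (1-i))) \<and> snd (L i ! Suc r) = mid (PP V E x) (snd (L i ! r)) (Wv (M (1-i)) ! r)))
   \<and> (\<forall>r. Suc r < length (L 0) \<and> Suc r < length (L 1) \<longrightarrow>
         snd (L 0 ! Suc r) = mid (PP V E x) (snd (L 0 ! r)) (snd (L 1 ! r))
       \<or> snd (L 1 ! Suc r) = mid (PP V E x) (snd (L 0 ! r)) (snd (L 1 ! r)))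
   \<and> (\<forall>i\<ge>2. L i = [] \<or> (\<exists>j<2. fin V (L j) \<and> L i = [(0, snd (last (L j)))]))"

lemma inv01_W:
  assumes "inv01 V P xi s m"
  shows "Wv m = (if fst (last s) = 1 then butlast (map snd s) else map snd s)"
  using assms unfolding inv01_def Wv_def by (auto simp: map_butlast[symmetric])

lemma inv01_Wnth:
  assumes "inv01 V P xi s m" "r < length (Wv m)"
  shows "Wv m ! r = snd (s ! r)" "r < length s"
  using assms inv01_W[OF assms(1)] by (auto simp: nth_butlast split: if_splits)

lemma inv01_Wlen:
  assumes "inv01 V P xi s m"
  shows "length s \<le> Suc (length (Wv m))"
  using inv01_W[OF assms] by auto

lemma inv01_mhd:
  assumes "inv01 V P xi s m" "m = Some w"
  shows "w \<noteq> [] \<and> snd (hd w) = xi \<and> w = take (length w) s \<and> (length w = Suc (card V) \<longrightarrow> fin V s \<and> w = s)"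
proof -
  have s: "s \<noteq> []" "snd (hd s) = xi" "length s \<le> Suc (card V)" using assms(1) unfolding inv01_def by auto
  show ?thesis
  proof (cases "fst (last s) = 1")
    case True
    then have w: "butlast s \<noteq> []" "w = butlast s" using assms unfolding inv01_def by (auto split: if_splits)
    then have "hd w = hd s" by (metis append_butlast_last_id hd_append2 s(1))
    then show ?thesis using w s by (auto simp: butlast_conv_take)
  next
    case False
    then have "w = s" "fst (last s) = 0" using assms unfolding inv01_def by auto
    then show ?thesis using s by (auto simp: fin_def)
  qed
qed


lemma newval_gen:
  assumes Ii: "inv01 V P xi s mi" and Ij: "inv01 V P xj t (M (1 - i))"
    and Pd: "P = (if i = 0 then cpath V E xi xj else cpath V E xj xi)"
  defines "r \<equiv> length s - 1"
  shows "newval V E i s M \<in> set P"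
    "newval V E i s M = snd (s ! r) \<or> (r < length (Wv (M (1-i))) \<and> newval V E i s M = mid P (snd (s ! r)) (Wv (M (1-i)) ! r))"
    "r < length (Wv (M (1-i))) \<Longrightarrow> newval V E i s M = mid P (snd (s ! r)) (Wv (M (1-i)) ! r)"
proof -
  have s: "s \<noteq> []" "snd (hd s) = xi" "snd ` set s \<subseteq> set P" using Ii unfolding inv01_def by auto
  have own: "snd (last s) = snd (s ! r)" using s unfolding r_def by (simp add: last_conv_nth)
  have ownP: "snd (s ! r) \<in> set P" using s r_def by auto
  have "newval V E i s M \<in> set P \<and> (newval V E i s M = snd (s ! r) \<or> (r < length (Wv (M (1-i))) \<and> newval V E i s M = mid P (snd (s ! r)) (Wv (M (1-i)) ! r)))
     \<and> (r < length (Wv (M (1-i))) \<longrightarrow> newval V E i s M = mid P (snd (s ! r)) (Wv (M (1-i)) ! r))"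
  proof (cases "M (1 - i)")
    case None
    then show ?thesis using own ownP unfolding newval_def Wv_def by simp
  next
    case (Some w)
    note w = inv01_mhd[OF Ij Some]
    show ?thesis
    proof (cases "r < length w")
      case True
      have wP: "snd (w ! r) \<in> set P"
      proof -
        have "r < length t" using w True by (metis length_take min.absorb4 not_less_iff_gr_or_eq min_def le_less_trans nat_le_linear)
        then have "w ! r = t ! r" using w True by (metis nth_take)
        then show ?thesis using Ij \<open>r < length t\<close> unfolding inv01_def by auto
      qed
      have cp: "(if i = 0 then cpath V E (snd (hd s)) (snd (hd w)) else cpath V E (snd (hd w)) (snd (hd s))) = P"
        using Pd s w by simp
      have nv: "newval V E i s M = mid P (snd (s ! r)) (snd (w ! r))"
        unfolding newval_def using Some True cp own unfolding r_def by simp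
      show ?thesis using nv True Some mid_in[OF ownP wP] unfolding Wv_def by simp
    next
      case False
      then show ?thesis using Some own ownP unfolding newval_def Wv_def r_def by simp
    qed
  qed
  then show "newval V E i s M \<in> set P"
    "newval V E i s M = snd (s ! r) \<or> (r < length (Wv (M (1-i))) \<and> newval V E i s M = mid P (snd (s ! r)) (Wv (M (1-i)) ! r))"
    "r < length (Wv (M (1-i))) \<Longrightarrow> newval V E i s M = mid P (snd (s ! r)) (Wv (M (1-i)) ! r)" by auto
qed


lemma step_algo: "step (algo V E) k (L, M) = (case actf V E k (L k) of Update r s' \<Rightarrow> (L(k := s'), M(k := Some r)) | Scan f \<Rightarrow> (L(k := f M), M))"
  by (simp add: algo_def)

lemma copyf_ok:
  fixes L :: "nat \<Rightarrow> (nat \<times> 'v) list"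
  assumes "inv01 V P x0 (L 0) (M 0)" "inv01 V P x1 (L 1) (M 1)"
  shows "copyf V M = [] \<or> (\<exists>j<2. fin V (L j) \<and> copyf V M = [(0, snd (last (L j)))])"
proof -
  have c1: "copy1 V M = [] \<or> (\<exists>j<2. fin V (L j) \<and> copy1 V M = [(0, snd (last (L j)))])"
  proof (cases "M 1")
    case (Some w) then show ?thesis using inv01_mhd[OF assms(2) Some] unfolding copy1_def
      by (auto intro: exI[of _ 1])
  qed (simp add: copy1_def)
  show ?thesis
  proof (cases "M 0")
    case (Some w) then show ?thesis using inv01_mhd[OF assms(1) Some] c1 unfolding copyf_def
      by (auto intro: exI[of _ 0])
  qed (simp add: copyf_def c1)
qed

lemma fin_M: "inv01 V P xi s m \<Longrightarrow> fin V s \<Longrightarrow> m = Some s"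
  unfolding inv01_def fin_def by auto

lemma copyf_ne:
  assumes "inv01 V P x0 (L 0) (M 0)" "inv01 V P x1 (L 1) (M 1)" "fin V (L 0) \<or> fin V (L 1)"
  shows "copyf V M \<noteq> []"
proof -
  have l: "length (L j) = Suc (card V)" if "fin V (L j)" for j using that fin_def by auto
  show ?thesis using assms(3)
  proof
    assume f: "fin V (L 0)"
    then show ?thesis using fin_M[OF assms(1) f] l[OF f] unfolding copyf_def by simp
  next
    assume f: "fin V (L 1)"
    then have "copy1 V M \<noteq> []" using fin_M[OF assms(2) f] l[OF f] unfolding copy1_def by simp
    then show ?thesis unfolding copyf_def by (auto split: option.splits)
  qed
qed

lemma invc_all: "invc V E x L M \<Longrightarrow> \<forall>i<2. inv01 V (PP V E x) (x i) (L i) (M i)"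
  unfolding invc_def using less_2_cases by auto

lemma less2: "(k::nat) < 2 \<Longrightarrow> k = 0 \<or> k = 1" by auto

lemma invc_copier_change:
  assumes I: "invc V E x L M" and eq: "\<forall>j<2. L' j = L j"
    and c: "\<forall>i\<ge>2. L' i = [] \<or> (\<exists>j<2. fin V (L j) \<and> L' i = [(0, snd (last (L j)))])"
  shows "invc V E x L' M"
proof -
  have e0: "L' 0 = L 0" and e1: "L' 1 = L 1" using eq by auto
  have c': "\<forall>i\<ge>2. L' i = [] \<or> (\<exists>j<2. fin V (L' j) \<and> L' i = [(0, snd (last (L' j)))])"
    using c eq by metis
  have eq': "\<And>i. i < 2 \<Longrightarrow> L' i = L i" using eq by blast
  have p1: "\<forall>i<2. \<forall>r. Suc r < length (L' i) \<longrightarrow> snd (L' i ! Suc r) = snd (L' i ! r)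
         \<or> (r < length (Wv (M (1-i))) \<and> snd (L' i ! Suc r) = mid (PP V E x) (snd (L' i ! r)) (Wv (M (1-i)) ! r))"
    using I unfolding invc_def by (simp add: eq')
  show ?thesis using I c' p1 unfolding invc_def e0 e1 by blast
qed

lemma pres_copier:
  assumes I: "invc V E x L M" and k: "2 \<le> k"
  shows "invc V E x (fst (step (algo V E) k (L, M))) (snd (step (algo V E) k (L, M)))"
proof (cases "L k = []")
  case False
  then show ?thesis using I k by (simp add: algo_def actf_def)
next
  case True
  have st: "step (algo V E) k (L, M) = (L(k := copyf V M), M)" using True k by (simp add: algo_def actf_def)
  have I0: "inv01 V (PP V E x) (x 0) (L 0) (M 0)" "inv01 V (PP V E x) (x 1) (L 1) (M 1)" using I unfolding invc_def by auto
  have cf: "copyf V M = [] \<or> (\<exists>j<2. fin V (L j) \<and> copyf V M = [(0, snd (last (L j)))])" using copyf_ok[OF I0] .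
  have eqj: "\<forall>j<2. (L(k := copyf V M)) j = L j" using k by auto
  have old: "\<forall>i\<ge>2. L i = [] \<or> (\<exists>j<2. fin V (L j) \<and> L i = [(0, snd (last (L j)))])"
    using I unfolding invc_def by blast
  have "\<forall>i\<ge>2. (L(k := copyf V M)) i = [] \<or> (\<exists>j<2. fin V (L j) \<and> (L(k := copyf V M)) i = [(0, snd (last (L j)))])"
    using old cf by auto
  from invc_copier_change[OF I eqj this] show ?thesis unfolding st fst_conv snd_conv .
qed


lemma invc_mono:
  assumes I: "invc V E x L M"
    and a: "\<forall>i<2. inv01 V (PP V E x) (x i) (L' i) (M' i)"
    and b: "\<forall>i<2. length (L' i) = length (L i) \<and> (\<forall>n<length (L i). snd (L' i ! n) = snd (L i ! n))"
    and c: "\<forall>i<2. length (Wv (M i)) \<le> length (Wv (M' i)) \<and> (\<forall>r<length (Wv (M i)). Wv (M' i) ! r = Wv (M i) ! r)"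
    and d: "\<forall>i\<ge>2. L' i = [] \<or> (\<exists>j<2. fin V (L' j) \<and> L' i = [(0, snd (last (L' j)))])"
  shows "invc V E x L' M'"
proof -
  have a0: "inv01 V (PP V E x) (x 0) (L' 0) (M' 0)" "inv01 V (PP V E x) (x 1) (L' 1) (M' 1)" using a by auto
  have p1: "\<forall>i<2. \<forall>r. Suc r < length (L' i) \<longrightarrow> snd (L' i ! Suc r) = snd (L' i ! r)
         \<or> (r < length (Wv (M' (1-i))) \<and> snd (L' i ! Suc r) = mid (PP V E x) (snd (L' i ! r)) (Wv (M' (1-i)) ! r))"
  proof (intro allI impI)
    fix i r assume i: "i < 2" and r: "Suc r < length (L' i)"
    have j: "1 - i < 2" by simp
    have old: "snd (L i ! Suc r) = snd (L i ! r)
         \<or> (r < length (Wv (M (1-i))) \<and> snd (L i ! Suc r) = mid (PP V E x) (snd (L i ! r)) (Wv (M (1-i)) ! r))"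
      using I i r b unfolding invc_def by auto
    have e1: "snd (L' i ! Suc r) = snd (L i ! Suc r)" "snd (L' i ! r) = snd (L i ! r)" using b i r by auto
    show "snd (L' i ! Suc r) = snd (L' i ! r)
         \<or> (r < length (Wv (M' (1-i))) \<and> snd (L' i ! Suc r) = mid (PP V E x) (snd (L' i ! r)) (Wv (M' (1-i)) ! r))"
      using old e1 c[rule_format, OF j] by auto
  qed
  have p2: "\<forall>r. Suc r < length (L' 0) \<and> Suc r < length (L' 1) \<longrightarrow>
         snd (L' 0 ! Suc r) = mid (PP V E x) (snd (L' 0 ! r)) (snd (L' 1 ! r))
       \<or> snd (L' 1 ! Suc r) = mid (PP V E x) (snd (L' 0 ! r)) (snd (L' 1 ! r))"
  proof (intro allI impI)
    fix r assume r: "Suc r < length (L' 0) \<and> Suc r < length (L' 1)"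
    have b0: "length (L' 0) = length (L 0)" "\<forall>n<length (L 0). snd (L' 0 ! n) = snd (L 0 ! n)"
     and b1: "length (L' 1) = length (L 1)" "\<forall>n<length (L 1). snd (L' 1 ! n) = snd (L 1 ! n)" using b by auto
    have "snd (L 0 ! Suc r) = mid (PP V E x) (snd (L 0 ! r)) (snd (L 1 ! r))
       \<or> snd (L 1 ! Suc r) = mid (PP V E x) (snd (L 0 ! r)) (snd (L 1 ! r))"
      using I r b0 b1 unfolding invc_def by auto
    then show "snd (L' 0 ! Suc r) = mid (PP V E x) (snd (L' 0 ! r)) (snd (L' 1 ! r))
       \<or> snd (L' 1 ! Suc r) = mid (PP V E x) (snd (L' 0 ! r)) (snd (L' 1 ! r))"
      using r b0 b1 by auto
  qed
  show ?thesis unfolding invc_def using a0 p1 p2 d by blast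
qed

lemma pres_update:
  assumes I: "invc V E x L M" and k: "k < 2" and p: "L k \<noteq> []" "fst (last (L k)) = 1"
  defines "s' \<equiv> butlast (L k) @ [(0, snd (last (L k)))]"
  shows "invc V E x (L(k := s')) (M(k := Some s'))"
proof -
  let ?s = "L k"
  have ms: "map snd s' = map snd ?s" unfolding s'_def using p
    by (metis append_butlast_last_id map_append list.simps(8,9) snd_conv)
  have bl: "butlast s' = butlast ?s" "last s' = (0, snd (last ?s))" "s' \<noteq> []" unfolding s'_def by auto
  have len: "length s' = length ?s" using ms by (metis length_map)
  have Ik: "inv01 V (PP V E x) (x k) (L k) (M k)" using invc_all[OF I] k by auto
  have hd': "snd (hd s') = snd (hd ?s)" using ms p bl by (metis hd_map)
  have set': "snd ` set s' = snd ` set ?s" using ms by (metis set_map)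
  have Ik': "inv01 V (PP V E x) (x k) s' (Some s')"
    using Ik hd' set' bl len unfolding inv01_def by auto
  have a: "\<forall>i<2. inv01 V (PP V E x) (x i) ((L(k := s')) i) ((M(k := Some s')) i)"
    using invc_all[OF I] Ik' by auto
  have b: "\<forall>i<2. length ((L(k := s')) i) = length (L i) \<and> (\<forall>n<length (L i). snd ((L(k := s')) i ! n) = snd (L i ! n))"
  proof -
    have "\<forall>n<length ?s. snd (s' ! n) = snd (?s ! n)" using ms len by (metis nth_map)
    then show ?thesis using len by auto
  qed
  have Wold: "Wv (M k) = butlast (map snd ?s)" using inv01_W[OF Ik] p by simp
  have Wnew: "Wv (Some s') = map snd ?s" using ms unfolding Wv_def by simp
  have c: "\<forall>i<2. length (Wv (M i)) \<le> length (Wv ((M(k := Some s')) i)) \<and> (\<forall>r<length (Wv (M i)). Wv ((M(k := Some s')) i) ! r = Wv (M i) ! r)"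
    using Wold Wnew by (auto simp: nth_butlast)
  have oldc: "\<forall>i\<ge>2. L i = [] \<or> (\<exists>j<2. fin V (L j) \<and> L i = [(0, snd (last (L j)))])"
    using I unfolding invc_def by blast
  have nf: "\<not> fin V (L k)" using p unfolding fin_def by simp
  have d: "\<forall>i\<ge>2. (L(k := s')) i = [] \<or> (\<exists>j<2. fin V ((L(k := s')) j) \<and> (L(k := s')) i = [(0, snd (last ((L(k := s')) j)))])"
  proof (intro allI impI)
    fix i :: nat assume "2 \<le> i"
    then have ik: "i \<noteq> k" using k by auto
    from oldc \<open>2 \<le> i\<close> have "L i = [] \<or> (\<exists>j<2. fin V (L j) \<and> L i = [(0, snd (last (L j)))])" by blast
    then show "(L(k := s')) i = [] \<or> (\<exists>j<2. fin V ((L(k := s')) j) \<and> (L(k := s')) i = [(0, snd (last ((L(k := s')) j)))])"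
      using ik nf by (metis fun_upd_other)
  qed
  show ?thesis using invc_mono[OF I a b c d] .
qed


lemma invc_P1: "invc V E x L M \<Longrightarrow> i < 2 \<Longrightarrow> Suc r < length (L i) \<Longrightarrow> snd (L i ! Suc r) = snd (L i ! r)
         \<or> (r < length (Wv (M (1-i))) \<and> snd (L i ! Suc r) = mid (PP V E x) (snd (L i ! r)) (Wv (M (1-i)) ! r))"
  unfolding invc_def by blast

lemma invc_P2: "invc V E x L M \<Longrightarrow> Suc r < length (L 0) \<Longrightarrow> Suc r < length (L 1) \<Longrightarrow>
         snd (L 0 ! Suc r) = mid (PP V E x) (snd (L 0 ! r)) (snd (L 1 ! r))
       \<or> snd (L 1 ! Suc r) = mid (PP V E x) (snd (L 0 ! r)) (snd (L 1 ! r))"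
  unfolding invc_def by blast

lemma pres_scan:
  assumes I: "invc V E x L M" and k: "k < 2" and p: "fst (last (L k)) \<noteq> 1" and l: "length (L k) < Suc (card V)"
  defines "s2 \<equiv> L k @ [(1, newval V E k (L k) M)]"
  shows "invc V E x (L(k := s2)) M"
proof -
  let ?s = "L k" and ?P = "PP V E x" and ?nv = "newval V E k (L k) M"
  define r0 where "r0 = length ?s - 1"
  have Ik: "inv01 V ?P (x k) (L k) (M k)" using invc_all[OF I] k by auto
  have Ij: "inv01 V ?P (x (1 - k)) (L (1 - k)) (M (1 - k))" using invc_all[OF I] by auto
  have Pd: "?P = (if k = 0 then cpath V E (x k) (x (1 - k)) else cpath V E (x (1 - k)) (x k))"
    using less2[OF k] unfolding PP_def by auto
  note nv = newval_gen[where M=M and i=k, OF Ik Ij Pd, folded r0_def]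
  have sne: "?s \<noteq> []" and t0: "fst (last ?s) = 0" and Mk: "M k = Some ?s" and sP: "snd ` set ?s \<subseteq> set ?P"
    and hs: "snd (hd ?s) = x k" and bt: "\<forall>e\<in>set (butlast ?s). fst e = 0"
    using Ik p unfolding inv01_def by auto
  have alls: "\<forall>e\<in>set ?s. fst e = 0"
  proof
    fix e assume "e \<in> set ?s"
    then have "e \<in> set (butlast ?s) \<or> e = last ?s" using sne by (metis append_butlast_last_id butlast.simps(2) in_set_butlast_appendI last_ConsR rotate1.simps(2) set_ConsD set_rotate1)
    then show "fst e = 0" using bt t0 by auto
  qed
  have r0: "Suc r0 = length ?s" using sne unfolding r0_def by simp
  have b2: "butlast s2 = ?s" "last s2 = (1, ?nv)" "s2 \<noteq> []" "hd s2 = hd ?s" "length s2 = Suc (length ?s)"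
    unfolding s2_def using sne by auto
  have st2: "snd ` set s2 \<subseteq> set ?P" unfolding s2_def using sP nv(1) by auto
  have Ik': "inv01 V ?P (x k) s2 (M k)"
    unfolding inv01_def using b2 hs l st2 alls Mk sne by auto
  have a: "\<forall>i<2. inv01 V ?P (x i) ((L(k := s2)) i) (M i)" using invc_all[OF I] Ik' by auto
  have p1: "\<forall>i<2. \<forall>r. Suc r < length ((L(k := s2)) i) \<longrightarrow> snd ((L(k := s2)) i ! Suc r) = snd ((L(k := s2)) i ! r)
         \<or> (r < length (Wv (M (1-i))) \<and> snd ((L(k := s2)) i ! Suc r) = mid ?P (snd ((L(k := s2)) i ! r)) (Wv (M (1-i)) ! r))"
  proof (intro allI impI)
    fix i r assume i: "i < 2" and r: "Suc r < length ((L(k := s2)) i)"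
    show "snd ((L(k := s2)) i ! Suc r) = snd ((L(k := s2)) i ! r)
         \<or> (r < length (Wv (M (1-i))) \<and> snd ((L(k := s2)) i ! Suc r) = mid ?P (snd ((L(k := s2)) i ! r)) (Wv (M (1-i)) ! r))"
    proof (cases "i = k")
      case False
      then show ?thesis using invc_P1[OF I i, of r] r by simp
    next
      case True
      show ?thesis
      proof (cases "Suc r < length ?s")
        case lt: True
        have "snd (?s ! Suc r) = snd (?s ! r)
         \<or> (r < length (Wv (M (1-k))) \<and> snd (?s ! Suc r) = mid ?P (snd (?s ! r)) (Wv (M (1-k)) ! r))"
          using invc_P1[OF I k lt] .
        then show ?thesis using True lt unfolding s2_def by (auto simp: nth_append)
      next
        case ge: False
        then have rr: "r = r0" using r True r0 unfolding s2_def by auto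
        have e: "(L(k := s2)) i ! Suc r = (1, ?nv)" "(L(k := s2)) i ! r = ?s ! r0"
          using True rr r0 unfolding s2_def by (auto simp: nth_append)
        show ?thesis using nv(2) e True rr by auto
      qed
    qed
  qed
  have p2: "\<forall>r. Suc r < length ((L(k := s2)) 0) \<and> Suc r < length ((L(k := s2)) 1) \<longrightarrow>
         snd ((L(k := s2)) 0 ! Suc r) = mid ?P (snd ((L(k := s2)) 0 ! r)) (snd ((L(k := s2)) 1 ! r))
       \<or> snd ((L(k := s2)) 1 ! Suc r) = mid ?P (snd ((L(k := s2)) 0 ! r)) (snd ((L(k := s2)) 1 ! r))"
  proof (intro allI impI)
    fix r assume r: "Suc r < length ((L(k := s2)) 0) \<and> Suc r < length ((L(k := s2)) 1)"
    have lk: "Suc r < length ((L(k := s2)) k)" and lj: "Suc r < length (L (1 - k))"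
      using r k by (auto dest!: less2)
    show "snd ((L(k := s2)) 0 ! Suc r) = mid ?P (snd ((L(k := s2)) 0 ! r)) (snd ((L(k := s2)) 1 ! r))
       \<or> snd ((L(k := s2)) 1 ! Suc r) = mid ?P (snd ((L(k := s2)) 0 ! r)) (snd ((L(k := s2)) 1 ! r))"
    proof (cases "Suc r < length ?s")
      case lt: True
      have e: "\<And>n. n < length ?s \<Longrightarrow> (L(k := s2)) k ! n = L k ! n" unfolding s2_def by (auto simp: nth_append)
      have ll: "Suc r < length (L 0)" "Suc r < length (L 1)" using lt lj less2[OF k] by auto
      have o: "snd (L 0 ! Suc r) = mid ?P (snd (L 0 ! r)) (snd (L 1 ! r))
       \<or> snd (L 1 ! Suc r) = mid ?P (snd (L 0 ! r)) (snd (L 1 ! r))"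
        using invc_P2[OF I ll] .
      have E: "(L(k := s2)) 0 ! Suc r = L 0 ! Suc r" "(L(k := s2)) 0 ! r = L 0 ! r"
        "(L(k := s2)) 1 ! Suc r = L 1 ! Suc r" "(L(k := s2)) 1 ! r = L 1 ! r"
        using e lt less2[OF k] by auto
      show ?thesis unfolding E using o .
    next
      case ge: False
      then have rr: "r = r0" using lk r0 unfolding s2_def by auto
      have rW: "r < length (Wv (M (1 - k)))" using inv01_Wlen[OF Ij] lj by simp
      have Wr: "Wv (M (1 - k)) ! r = snd (L (1 - k) ! r)" using inv01_Wnth(1)[OF Ij rW] .
      have nvm: "?nv = mid ?P (snd (?s ! r)) (snd (L (1 - k) ! r))" using nv(3) rW Wr rr by simp
      have e: "(L(k := s2)) k ! Suc r = (1, ?nv)" "(L(k := s2)) k ! r = ?s ! r"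
        using rr r0 unfolding s2_def by (auto simp: nth_append)
      show ?thesis
      proof (cases "k = 0")
        case True
        then show ?thesis using e nvm by simp
      next
        case False
        then have k1: "k = 1" using k by simp
        have ms: "mid ?P (snd (L 1 ! r)) (snd (L 0 ! r)) = mid ?P (snd (L 0 ! r)) (snd (L 1 ! r))" by (rule mid_sym)
        have "?nv = mid ?P (snd (L 0 ! r)) (snd (L 1 ! r))" using nvm k1 ms by simp
        then show ?thesis using e k1 by simp
      qed
    qed
  qed
  have oldc: "\<forall>i\<ge>2. L i = [] \<or> (\<exists>j<2. fin V (L j) \<and> L i = [(0, snd (last (L j)))])"
    using I unfolding invc_def by blast
  have nf: "\<not> fin V (L k)" using l unfolding fin_def by simp
  have d: "\<forall>i\<ge>2. (L(k := s2)) i = [] \<or> (\<exists>j<2. fin V ((L(k := s2)) j) \<and> (L(k := s2)) i = [(0, snd (last ((L(k := s2)) j)))])"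
  proof (intro allI impI)
    fix i :: nat assume "2 \<le> i"
    then have ik: "i \<noteq> k" using k by auto
    from oldc \<open>2 \<le> i\<close> have "L i = [] \<or> (\<exists>j<2. fin V (L j) \<and> L i = [(0, snd (last (L j)))])" by blast
    then show "(L(k := s2)) i = [] \<or> (\<exists>j<2. fin V ((L(k := s2)) j) \<and> (L(k := s2)) i = [(0, snd (last ((L(k := s2)) j)))])"
      using ik nf by (metis fun_upd_other)
  qed
  have a0: "inv01 V ?P (x 0) ((L(k := s2)) 0) (M 0)" "inv01 V ?P (x 1) ((L(k := s2)) 1) (M 1)" by (rule a[rule_format], simp)+
  show ?thesis unfolding invc_def using a0 p1 p2 d by blast
qed



lemma step_other: "i \<noteq> k \<Longrightarrow> fst (step (algo V E) k (L, M)) i = L i"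
  by (simp add: algo_def split: op.splits)

lemma pres_step:
  assumes I: "invc V E x L M"
  shows "invc V E x (fst (step (algo V E) k (L, M))) (snd (step (algo V E) k (L, M)))"
proof (cases "k < 2")
  case False
  then show ?thesis using pres_copier[OF I] by simp
next
  case k: True
  have Ik: "inv01 V (PP V E x) (x k) (L k) (M k)" using invc_all[OF I] k by auto
  then have ne: "L k \<noteq> []" unfolding inv01_def by simp
  show ?thesis
  proof (cases "fst (last (L k)) = 1")
    case True
    then have "step (algo V E) k (L, M) = (L(k := butlast (L k) @ [(0, snd (last (L k)))]), M(k := Some (butlast (L k) @ [(0, snd (last (L k)))])))"
      using k ne by (simp add: algo_def actf_def)
    then show ?thesis using pres_update[OF I k ne True] by simp
  next
    case p: False
    show ?thesis
    proof (cases "Suc (card V) \<le> length (L k)")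
      case True
      then have "step (algo V E) k (L, M) = (L, M)" using k p by (simp add: algo_def actf_def)
      then show ?thesis using I by simp
    next
      case False
      then have "step (algo V E) k (L, M) = (L(k := L k @ [(1, newval V E k (L k) M)]), M)"
        using k p by (simp add: algo_def actf_def)
      then show ?thesis using pres_scan[OF I k p] False by simp
    qed
  qed
qed

lemma init_inv:
  assumes c: "connected_graph V E" and x: "x 0 \<in> V" "x 1 \<in> V"
  shows "invc V E x (\<lambda>i. if i < 2 then [(1, x i)] else []) (\<lambda>_. None)"
proof -
  note cp = cpath_ok[OF c x]
  have ne: "PP V E x \<noteq> []" using cp unfolding PP_def walk_def by auto
  have "x 0 \<in> set (PP V E x)" "x 1 \<in> set (PP V E x)" using cp ne unfolding PP_def
    by (metis hd_in_set, metis last_in_set)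
  then show ?thesis unfolding invc_def inv01_def by (auto simp: fin_def)
qed

definition Lt where "Lt V E x \<sigma> t = fst (exec (algo V E) x \<sigma> t)"
definition Mt where "Mt V E x \<sigma> t = snd (exec (algo V E) x \<sigma> t)"

lemma exec_Suc: "exec (algo V E) x \<sigma> (Suc t) = step (algo V E) (\<sigma> t) (Lt V E x \<sigma> t, Mt V E x \<sigma> t)"
  by (simp add: Lt_def Mt_def)

lemma exec_inv:
  assumes c: "connected_graph V E" and x: "x 0 \<in> V" "x 1 \<in> V"
  shows "invc V E x (Lt V E x \<sigma> t) (Mt V E x \<sigma> t)"
proof (induction t)
  case 0
  have "Lt V E x \<sigma> 0 = (\<lambda>i. if i < 2 then [(1, x i)] else [])" "Mt V E x \<sigma> 0 = (\<lambda>_. None)"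
    by (auto simp: Lt_def Mt_def algo_def)
  then show ?case using init_inv[OF c x] by simp
next
  case (Suc t)
  then show ?case using pres_step[OF Suc] unfolding Lt_def[of _ _ _ _ "Suc t"] Mt_def[of _ _ _ _ "Suc t"] exec_Suc by simp
qed

lemma fin_step:
  assumes I: "invc V E x L M" and j: "j < 2" and f: "fin V (L j)"
  shows "fst (step (algo V E) k (L, M)) j = L j"
proof (cases "k = j")
  case True
  have ne: "L j \<noteq> []" using f unfolding fin_def by auto
  then show ?thesis using True j f by (simp add: algo_def actf_def fin_def)
next
  case False
  then show ?thesis using step_other by metis
qed

lemma copier_step:
  assumes "2 \<le> i" "L i \<noteq> []"
  shows "fst (step (algo V E) k (L, M)) i = L i"
  using assms by (cases "k = i") (auto simp: algo_def actf_def step_other)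


definition mu :: "(nat \<times> 'v) list \<Rightarrow> nat" where
  "mu s = 2 * length s - (if fst (last s) = 1 then 1 else 0)"

lemma own_progress:
  assumes I: "invc V E x L M" and k: "k < 2" and nf: "\<not> fin V (L k)"
  shows "mu (fst (step (algo V E) k (L, M)) k) = Suc (mu (L k))"
proof -
  have Ik: "inv01 V (PP V E x) (x k) (L k) (M k)" using invc_all[OF I] k by auto
  then have ne: "L k \<noteq> []" and t01: "fst (last (L k)) = 0 \<or> fst (last (L k)) = 1"
    and len: "length (L k) \<le> Suc (card V)" unfolding inv01_def by auto
  show ?thesis
  proof (cases "fst (last (L k)) = 1")
    case True
    then have "fst (step (algo V E) k (L, M)) k = butlast (L k) @ [(0, snd (last (L k)))]"
      using k ne by (simp add: algo_def actf_def)
    moreover have "length (butlast (L k) @ [(0, snd (last (L k)))]) = length (L k)" using ne by simp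
    ultimately show ?thesis using True ne unfolding mu_def by simp
  next
    case p: False
    then have t0: "fst (last (L k)) = 0" using t01 by simp
    then have l: "\<not> Suc (card V) \<le> length (L k)" using nf len unfolding fin_def by auto
    then have "fst (step (algo V E) k (L, M)) k = L k @ [(1, newval V E k (L k) M)]"
      using k p by (simp add: algo_def actf_def)
    then show ?thesis using t0 ne unfolding mu_def by simp
  qed
qed

lemma mu_bound: "inv01 V P xi s m \<Longrightarrow> mu s \<le> 2 * Suc (card V)"
  unfolding inv01_def mu_def by auto

lemma fin_stable:
  assumes c: "connected_graph V E" and x: "x 0 \<in> V" "x 1 \<in> V" and j: "j < 2"
    and f: "fin V (Lt V E x \<sigma> t j)" and tt: "t \<le> t'"
  shows "Lt V E x \<sigma> t' j = Lt V E x \<sigma> t j"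
  using tt
proof (induction t' rule: dec_induct)
  case base then show ?case by simp
next
  case (step n)
  have "Lt V E x \<sigma> (Suc n) j = fst (step (algo V E) (\<sigma> n) (Lt V E x \<sigma> n, Mt V E x \<sigma> n)) j"
    unfolding Lt_def[of _ _ _ _ "Suc n"] exec_Suc by simp
  also have "\<dots> = Lt V E x \<sigma> n j"
    using fin_step[OF exec_inv[OF c x] j] step.IH f by simp
  finally show ?case using step.IH by simp
qed

lemma copier_stable:
  assumes i: "2 \<le> i" and ne: "Lt V E x \<sigma> t i \<noteq> []" and tt: "t \<le> t'"
  shows "Lt V E x \<sigma> t' i = Lt V E x \<sigma> t i"
  using tt
proof (induction t' rule: dec_induct)
  case base then show ?case by simp
next
  case (step n)
  have "Lt V E x \<sigma> (Suc n) i = fst (step (algo V E) (\<sigma> n) (Lt V E x \<sigma> n, Mt V E x \<sigma> n)) i"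
    unfolding Lt_def[of _ _ _ _ "Suc n"] exec_Suc by simp
  also have "\<dots> = Lt V E x \<sigma> n i"
    by (rule copier_step[OF i]) (use step.IH ne in simp)
  finally show ?case using step.IH by simp
qed

lemma unbounded_steps:
  assumes "\<not> crashed \<sigma> i"
  shows "\<exists>t'\<ge>t. \<sigma> t' = i"
proof (rule ccontr)
  assume "\<not> ?thesis"
  then have "{t. \<sigma> t = i} \<subseteq> {..<t}" by (auto simp: not_le)
  then have "finite {t. \<sigma> t = i}" by (rule finite_subset) simp
  then show False using assms unfolding crashed_def by simp
qed

lemma proc_terminates:
  assumes c: "connected_graph V E" and x: "x 0 \<in> V" "x 1 \<in> V" and i: "i < 2"
    and nc: "\<not> crashed \<sigma> i"
  shows "\<exists>t. fin V (Lt V E x \<sigma> t i)"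
proof (rule ccontr)
  assume nf: "\<not> ?thesis"
  define m where "m t = mu (Lt V E x \<sigma> t i)" for t
  have LS: "Lt V E x \<sigma> (Suc t) i = fst (step (algo V E) (\<sigma> t) (Lt V E x \<sigma> t, Mt V E x \<sigma> t)) i" for t
    unfolding Lt_def[of _ _ _ _ "Suc t"] exec_Suc by simp
  have prog: "m (Suc t) = Suc (m t)" if st: "\<sigma> t = i" for t
  proof -
    have n: "\<not> fin V (Lt V E x \<sigma> t i)" using nf by blast
    show ?thesis using own_progress[OF exec_inv[OF c x] i n] LS[of t] st unfolding m_def by simp
  qed
  have inc: "m t \<le> m (Suc t)" for t
  proof (cases "\<sigma> t = i")
    case True
    then show ?thesis using prog by simp
  next
    case False
    then have "Lt V E x \<sigma> (Suc t) i = Lt V E x \<sigma> t i" using LS[of t] step_other[of i "\<sigma> t"] by simp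
    then show ?thesis unfolding m_def by simp
  qed
  have mono: "t \<le> t' \<Longrightarrow> m t \<le> m t'" for t t' using lift_Suc_mono_le[of m, OF inc] by blast
  have "\<exists>t. K \<le> m t" for K
  proof (induction K)
    case 0 then show ?case by simp
  next
    case (Suc K)
    then obtain t where t: "K \<le> m t" by blast
    obtain t' where t': "t' \<ge> t" "\<sigma> t' = i" using unbounded_steps[OF nc] by blast
    have "Suc K \<le> m (Suc t')" using prog[OF t'(2)] mono[OF t'(1)] t by simp
    then show ?case by blast
  qed
  then obtain t where t: "Suc (2 * Suc (card V)) \<le> m t" by blast
  have "inv01 V (PP V E x) (x i) (Lt V E x \<sigma> t i) (Mt V E x \<sigma> t i)"
    using invc_all[OF exec_inv[OF c x]] i by blast
  then have "m t \<le> 2 * Suc (card V)" unfolding m_def by (rule mu_bound)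
  with t show False by simp
qed


lemma out_at_eq: "out_at (algo V E) x \<sigma> i t = outf V i (Lt V E x \<sigma> t i)"
  by (simp add: out_at_def Lt_def algo_def)

lemma invc_cop: "invc V E x L M \<Longrightarrow> 2 \<le> i \<Longrightarrow> L i = [] \<or> (\<exists>j<2. fin V (L j) \<and> L i = [(0, snd (last (L j)))])"
  unfolding invc_def by blast

lemma out_char:
  assumes c: "connected_graph V E" and x: "x 0 \<in> V" "x 1 \<in> V"
    and o: "out_at (algo V E) x \<sigma> i t = Some y"
  shows "\<exists>j<2. fin V (Lt V E x \<sigma> t j) \<and> y = snd (last (Lt V E x \<sigma> t j))"
proof (cases "i < 2")
  case True
  then show ?thesis using o unfolding out_at_eq outf_def fin_def by (auto split: if_splits)
next
  case False
  then have ne: "Lt V E x \<sigma> t i \<noteq> []" and y: "y = snd (hd (Lt V E x \<sigma> t i))"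
    using o unfolding out_at_eq outf_def by (auto split: if_splits)
  from invc_cop[OF exec_inv[OF c x] ] False ne obtain j where
    "j < 2" "fin V (Lt V E x \<sigma> t j)" "Lt V E x \<sigma> t i = [(0, snd (last (Lt V E x \<sigma> t j)))]"
    by (metis not_less)
  then show ?thesis using y by auto
qed

lemma final_agree:
  assumes I: "invc V E x L M" and c: "connected_graph V E" and g: "finite_graph V E"
    and x: "x 0 \<in> V" "x 1 \<in> V" and f0: "fin V (L 0)" and f1: "fin V (L 1)"
  shows "snd (last (L 0)) = snd (last (L 1)) \<or> E (snd (last (L 0))) (snd (last (L 1)))"
proof -
  let ?P = "PP V E x"
  note cp = cpath_ok[OF c x, folded PP_def]
  have I0: "inv01 V ?P (x 0) (L 0) (M 0)" and I1: "inv01 V ?P (x 1) (L 1) (M 1)" using I unfolding invc_def by auto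
  define c0 where "c0 = map snd (L 0)"
  define c1 where "c1 = map snd (L 1)"
  have dP: "distinct ?P" and Pne: "?P \<noteq> []" and wP: "walk V E ?P" using cp unfolding walk_def by auto
  have len: "length c0 = Suc (card V)" "length c1 = Suc (card V)" using f0 f1 unfolding c0_def c1_def fin_def by auto
  have ne: "L 0 \<noteq> []" "L 1 \<noteq> []" using I0 I1 unfolding inv01_def by auto
  have sub: "set c0 \<subseteq> set ?P" "set c1 \<subseteq> set ?P" using I0 I1 unfolding inv01_def c0_def c1_def by auto
  have h0: "c0 ! 0 = hd ?P" using I0 cp ne unfolding inv01_def c0_def by (simp add: hd_conv_nth[symmetric] hd_map)
  have h1: "c1 ! 0 = last ?P" using I1 cp ne unfolding inv01_def c1_def by (simp add: hd_conv_nth[symmetric] hd_map)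
  have fv: "finite V" using g unfolding finite_graph_def by simp
  have lP: "length ?P \<le> Suc (card V)"
  proof -
    have "length ?P = card (set ?P)" using dP by (simp add: distinct_card)
    also have "\<dots> \<le> card V" using wP fv unfolding walk_def by (simp add: card_mono)
    finally show ?thesis by simp
  qed
  have st: "(c0!Suc r = c0!r \<or> c0!Suc r = mid ?P (c0!r) (c1!r))
      \<and> (c1!Suc r = c1!r \<or> c1!Suc r = mid ?P (c0!r) (c1!r))
      \<and> (c0!Suc r = mid ?P (c0!r) (c1!r) \<or> c1!Suc r = mid ?P (c0!r) (c1!r))" if r: "r < card V" for r
  proof -
    have l0: "Suc r < length (L 0)" and l1: "Suc r < length (L 1)" using len r unfolding c0_def c1_def by auto
    have e0: "c0 ! n = snd (L 0 ! n)" if "n < length (L 0)" for n using that unfolding c0_def by simp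
    have e1: "c1 ! n = snd (L 1 ! n)" if "n < length (L 1)" for n using that unfolding c1_def by simp
    have a: "c0!Suc r = c0!r \<or> c0!Suc r = mid ?P (c0!r) (c1!r)"
    proof -
      have W1: "Wv (M 1) = map snd (L 1)" using inv01_W[OF I1] f1 unfolding fin_def by simp
      from invc_P1[OF I _ l0] have "snd (L 0 ! Suc r) = snd (L 0 ! r)
         \<or> (r < length (Wv (M 1)) \<and> snd (L 0 ! Suc r) = mid ?P (snd (L 0 ! r)) (Wv (M 1) ! r))" by simp
      then show ?thesis using W1 e0 e1 l0 l1 unfolding c1_def by auto
    qed
    have b: "c1!Suc r = c1!r \<or> c1!Suc r = mid ?P (c0!r) (c1!r)"
    proof -
      have W0: "Wv (M 0) = map snd (L 0)" using inv01_W[OF I0] f0 unfolding fin_def by simp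
      from invc_P1[OF I _ l1] have "snd (L 1 ! Suc r) = snd (L 1 ! r)
         \<or> (r < length (Wv (M 0)) \<and> snd (L 1 ! Suc r) = mid ?P (snd (L 1 ! r)) (Wv (M 0) ! r))" by simp
      moreover have "mid ?P (snd (L 1 ! r)) (snd (L 0 ! r)) = mid ?P (snd (L 0 ! r)) (snd (L 1 ! r))" by (rule mid_sym)
      ultimately show ?thesis using W0 e0 e1 l0 l1 unfolding c0_def by auto
    qed
    have d: "c0!Suc r = mid ?P (c0!r) (c1!r) \<or> c1!Suc r = mid ?P (c0!r) (c1!r)"
      using invc_P2[OF I l0 l1] e0 e1 l0 l1 by simp
    show ?thesis using a b d by blast
  qed
  have cv: "\<bar>int (idx ?P (c0!card V)) - int (idx ?P (c1!card V))\<bar> \<le> 1"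
    by (rule converge[OF dP Pne len sub h0 h1 lP st])
  have la: "c0 ! card V = snd (last (L 0))" "c1 ! card V = snd (last (L 1))"
    using len ne unfolding c0_def c1_def by (simp_all add: last_conv_nth)
  have inP: "c0 ! card V \<in> set ?P" "c1 ! card V \<in> set ?P" using sub len by auto
  have sym: "\<forall>u v. E u v \<longrightarrow> E v u" using g unfolding finite_graph_def by blast
  show ?thesis using adj_from_idx[OF wP dP sym inP cv] la by simp
qed

lemma valid_out:
  assumes I: "invc V E x L M" and c: "connected_graph V E" and x: "x 0 \<in> V" "x 1 \<in> V"
    and j: "j < 2"
  shows "snd (last (L j)) \<in> V \<and> on_shortest_path V E (x 0) (x 1) (snd (last (L j)))"
proof -
  note cp = cpath_ok[OF c x, folded PP_def]
  have Ij: "inv01 V (PP V E x) (x j) (L j) (M j)" using invc_all[OF I] j by auto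
  then have "snd (last (L j)) \<in> set (PP V E x)" unfolding inv01_def by auto
  moreover have "set (PP V E x) \<subseteq> V" using cp unfolding walk_def by auto
  ultimately show ?thesis using cp unfolding on_shortest_path_def PP_def by blast
qed


lemma dec_ex:
  assumes "out_at A x \<sigma> i t = Some y"
  shows "\<exists>y'. decides A x \<sigma> i y'"
proof -
  define t0 where "t0 = (LEAST t. out_at A x \<sigma> i t \<noteq> None)"
  have "out_at A x \<sigma> i t0 \<noteq> None" unfolding t0_def by (rule LeastI[of _ t]) (simp add: assms)
  then obtain y' where y': "out_at A x \<sigma> i t0 = Some y'" by blast
  have "\<forall>t'<t0. out_at A x \<sigma> i t' = None" unfolding t0_def using not_less_Least by blast
  then show ?thesis using y' unfolding decides_def by blast
qed

lemma out_fin: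
  assumes "i < 2" "fin V (Lt V E x \<sigma> t i)"
  shows "out_at (algo V E) x \<sigma> i t = Some (snd (last (Lt V E x \<sigma> t i)))"
  using assms unfolding out_at_eq outf_def fin_def by simp

lemma some_alive:
  assumes "admissible1 n \<sigma>" "2 \<le> n"
  shows "\<exists>j<2. \<not> crashed \<sigma> j"
proof (rule ccontr)
  assume "\<not> ?thesis"
  then have "{0, 1} \<subseteq> {i. i < n \<and> crashed \<sigma> i}" using assms(2) by auto
  moreover have "finite {i. i < n \<and> crashed \<sigma> i}" by simp
  ultimately have "card {0::nat, 1} \<le> card {i. i < n \<and> crashed \<sigma> i}" by (rule card_mono[rotated])
  then show False using assms(1) unfolding admissible1_def by simp
qed

theorem mainTheorem6:
  fixes V :: "'v set" and E :: "'v \<Rightarrow> 'v \<Rightarrow> bool" and n :: nat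
  assumes "finite_graph V E" and "connected_graph V E" and "n \<ge> 2"
  shows "\<exists>A :: ((nat \<times> 'v) list, (nat \<times> 'v) list, 'v) alg. solves_GAA_1res V E n A"
proof -
  note g = assms(1) and c = assms(2) and n2 = assms(3)
  have "solves_GAA_1res V E n (algo V E)"
    unfolding solves_GAA_1res_def
  proof (rule allI, rule allI, rule impI, intro conjI)
    fix x \<sigma> assume H: "(\<forall>i<n. x i \<in> V) \<and> admissible1 n \<sigma>"
    have x: "x 0 \<in> V" "x 1 \<in> V" using H n2 by auto
    have adm: "admissible1 n \<sigma>" using H by blast
    have dec_out: "\<exists>t. out_at (algo V E) x \<sigma> i t = Some y" if "decides (algo V E) x \<sigma> i y" for i y
      using that unfolding decides_def by blast
    show "\<forall>i<n. \<not> crashed \<sigma> i \<longrightarrow> (\<exists>y. decides (algo V E) x \<sigma> i y)"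
    proof (intro allI impI)
      fix i assume i: "i < n" and nc: "\<not> crashed \<sigma> i"
      show "\<exists>y. decides (algo V E) x \<sigma> i y"
      proof (cases "i < 2")
        case True
        obtain t where "fin V (Lt V E x \<sigma> t i)" using proc_terminates[OF c x True nc] by blast
        then show ?thesis using out_fin[OF True] dec_ex by metis
      next
        case False
        obtain j where j: "j < 2" "\<not> crashed \<sigma> j" using some_alive[OF adm n2] by blast
        obtain t0 where t0: "fin V (Lt V E x \<sigma> t0 j)" using proc_terminates[OF c x j] by blast
        obtain t where t: "t \<ge> t0" "\<sigma> t = i" using unbounded_steps[OF nc] by blast
        have fj: "fin V (Lt V E x \<sigma> t j)" using fin_stable[OF c x j(1) t0 t(1)] t0 by simp
        show ?thesis
        proof (cases "Lt V E x \<sigma> t i = []")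
          case False
          then have "out_at (algo V E) x \<sigma> i t = Some (snd (hd (Lt V E x \<sigma> t i)))"
            using \<open>\<not> i < 2\<close> unfolding out_at_eq outf_def by simp
          then show ?thesis using dec_ex by metis
        next
          case True
          have I: "invc V E x (Lt V E x \<sigma> t) (Mt V E x \<sigma> t)" by (rule exec_inv[OF c x])
          have I0: "inv01 V (PP V E x) (x 0) (Lt V E x \<sigma> t 0) (Mt V E x \<sigma> t 0)"
            "inv01 V (PP V E x) (x 1) (Lt V E x \<sigma> t 1) (Mt V E x \<sigma> t 1)" using I unfolding invc_def by auto
          have f01: "fin V (Lt V E x \<sigma> t 0) \<or> fin V (Lt V E x \<sigma> t 1)" using fj j by (auto dest!: less2)
          have cne: "copyf V (Mt V E x \<sigma> t) \<noteq> []" by (rule copyf_ne[OF I0 f01])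
          have "Lt V E x \<sigma> (Suc t) i = copyf V (Mt V E x \<sigma> t)"
            unfolding Lt_def[of _ _ _ _ "Suc t"] exec_Suc using t(2) True \<open>\<not> i < 2\<close>
            by (simp add: algo_def actf_def)
          then have "out_at (algo V E) x \<sigma> i (Suc t) = Some (snd (hd (copyf V (Mt V E x \<sigma> t))))"
            using \<open>\<not> i < 2\<close> cne unfolding out_at_eq outf_def by simp
          then show ?thesis using dec_ex by metis
        qed
      qed
    qed
    show "\<forall>i<n. \<forall>j<n. \<forall>yi yj. decides (algo V E) x \<sigma> i yi \<and> decides (algo V E) x \<sigma> j yj \<longrightarrow> yi = yj \<or> E yi yj"
    proof (intro allI impI)
      fix i j yi yj assume "i < n" "j < n" and d: "decides (algo V E) x \<sigma> i yi \<and> decides (algo V E) x \<sigma> j yj"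
      obtain t1 where t1: "out_at (algo V E) x \<sigma> i t1 = Some yi" using dec_out d by blast
      obtain t2 where t2: "out_at (algo V E) x \<sigma> j t2 = Some yj" using dec_out d by blast
      obtain j1 where j1: "j1 < 2" "fin V (Lt V E x \<sigma> t1 j1)" "yi = snd (last (Lt V E x \<sigma> t1 j1))"
        using out_char[OF c x t1] by blast
      obtain j2 where j2: "j2 < 2" "fin V (Lt V E x \<sigma> t2 j2)" "yj = snd (last (Lt V E x \<sigma> t2 j2))"
        using out_char[OF c x t2] by blast
      define T where "T = max t1 t2"
      have e1: "Lt V E x \<sigma> T j1 = Lt V E x \<sigma> t1 j1" by (rule fin_stable[OF c x j1(1) j1(2)]) (simp add: T_def)
      have e2: "Lt V E x \<sigma> T j2 = Lt V E x \<sigma> t2 j2" by (rule fin_stable[OF c x j2(1) j2(2)]) (simp add: T_def)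
      show "yi = yj \<or> E yi yj"
      proof (cases "j1 = j2")
        case True
        then show ?thesis using e1 e2 j1 j2 by simp
      next
        case False
        have I: "invc V E x (Lt V E x \<sigma> T) (Mt V E x \<sigma> T)" by (rule exec_inv[OF c x])
        have sym: "\<forall>u v. E u v \<longrightarrow> E v u" using g unfolding finite_graph_def by blast
        have f: "fin V (Lt V E x \<sigma> T j1)" "fin V (Lt V E x \<sigma> T j2)" using e1 e2 j1 j2 by simp_all
        show ?thesis
        proof (cases "j1 = 0")
          case True
          then have jj: "j2 = 1" using False j2 by simp
          have fa: "snd (last (Lt V E x \<sigma> T 0)) = snd (last (Lt V E x \<sigma> T 1)) \<or> E (snd (last (Lt V E x \<sigma> T 0))) (snd (last (Lt V E x \<sigma> T 1)))"
            by (rule final_agree[OF I c g x]) (use f True jj in simp_all)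
          show ?thesis using fa e1 e2 j1(3) j2(3) True jj by simp
        next
          case False
          then have jj: "j1 = 1" "j2 = 0" using \<open>j1 \<noteq> j2\<close> j1 j2 by auto
          have fa: "snd (last (Lt V E x \<sigma> T 0)) = snd (last (Lt V E x \<sigma> T 1)) \<or> E (snd (last (Lt V E x \<sigma> T 0))) (snd (last (Lt V E x \<sigma> T 1)))"
            by (rule final_agree[OF I c g x]) (use f jj in simp_all)
          then have "yj = yi \<or> E yj yi" using e1 e2 j1(3) j2(3) jj by simp
          then show ?thesis using sym by blast
        qed
      qed
    qed
    show "\<forall>i<n. \<forall>y. decides (algo V E) x \<sigma> i y \<longrightarrow> y \<in> V \<and> (\<exists>j<n. \<exists>k<n. on_shortest_path V E (x j) (x k) y)"
    proof (intro allI impI)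
      fix i y assume "i < n" and d: "decides (algo V E) x \<sigma> i y"
      obtain t where t: "out_at (algo V E) x \<sigma> i t = Some y" using dec_out d by blast
      obtain j where j: "j < 2" "y = snd (last (Lt V E x \<sigma> t j))"
        using out_char[OF c x t] by blast
      have "y \<in> V \<and> on_shortest_path V E (x 0) (x 1) y"
        using valid_out[OF exec_inv[OF c x] c x j(1)] j by simp
      then show "y \<in> V \<and> (\<exists>j<n. \<exists>k<n. on_shortest_path V E (x j) (x k) y)"
      proof -
        have "(0::nat) < n" "(1::nat) < n" using n2 by auto
        then show ?thesis using \<open>y \<in> V \<and> on_shortest_path V E (x 0) (x 1) y\<close> by blast
      qed
    qed
  qed
  then show ?thesis by blast
qed

end
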